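(* In the setting of the context (with $g$ unimodal, symmetric about $0$ and logconcave), the frequentist coverage $C(\theta)$ is nonincreasing (decreasing) in $\theta$ on the interval $(d_1,2d_0)$.
   Context: Let $g$ be a probability density on $\mathbb{R}$, unimodal and symmetric about $0$ (i.e. $g(z)=g(-z)$ and $g$ nonincreasing on $[0,\infty)$), and logconcave ($\log g$ concave on its support), with cdf $G$ and quantile function $G^{-1}(t)=\inf\{x:G(x)\ge t\}$. Let $X$ have density $g(x-\theta)$, $\theta\ge0$, and $P_\theta$ the corresponding probability. Fix $\alpha\in(0,1)$, and set $d_0=G^{-1}(\tfrac1{1+\alpha})$, $d_1=G^{-1}(1-\tfrac\alpha2)$. The HPD credible interval (prior $1_{[0,\infty)}(\theta)$, credibility $1-\alpha$) is $[l(X),u(X)]$ with $l(x)=\{x-G^{-1}(\tfrac12+\tfrac{1-\alpha}2G(x))\}1_{(d_0,\infty)}(x)$, $u(x)=x-G^{-1}(\alpha G(x))$ for $x\le d_0$ and $u(x)=x+G^{-1}(\tfrac12+\tfrac{1-\alpha}2G(x))$ for $x>d_0$. The frequentist coverage is $C(\theta)=P_\theta(l(X)\le\theta\le u(X))$. *)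

theory Defs
  imports "HOL-Analysis.Analysis"
begin

definition is_density :: "(real \<Rightarrow> real) \<Rightarrow> bool" where
  "is_density g \<longleftrightarrow> (\<forall>x. 0 \<le> g x) \<and> (g has_integral 1) UNIV"

definition symmetric_unimodal :: "(real \<Rightarrow> real) \<Rightarrow> bool" where
  "symmetric_unimodal g \<longleftrightarrow> (\<forall>z. g z = g (- z)) \<and> (\<forall>x y. 0 \<le> x \<longrightarrow> x \<le> y \<longrightarrow> g y \<le> g x)"

definition logconcave :: "(real \<Rightarrow> real) \<Rightarrow> bool" where
  "logconcave g \<longleftrightarrow> concave_on {x. 0 < g x} (\<lambda>x. ln (g x))"

definition cdf_of :: "(real \<Rightarrow> real) \<Rightarrow> real \<Rightarrow> real" where
  "cdf_of g x = integral {..x} g"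

definition quantile_of :: "(real \<Rightarrow> real) \<Rightarrow> real \<Rightarrow> real" where
  "quantile_of g t = Inf {x. cdf_of g x \<ge> t}"

definition hpd_d0 :: "(real \<Rightarrow> real) \<Rightarrow> real \<Rightarrow> real" where
  "hpd_d0 g \<alpha> = quantile_of g (1 / (1 + \<alpha>))"

definition hpd_d1 :: "(real \<Rightarrow> real) \<Rightarrow> real \<Rightarrow> real" where
  "hpd_d1 g \<alpha> = quantile_of g (1 - \<alpha> / 2)"

definition hpd_l :: "(real \<Rightarrow> real) \<Rightarrow> real \<Rightarrow> real \<Rightarrow> real" where
  "hpd_l g \<alpha> x =
     (if x > hpd_d0 g \<alpha>
      then x - quantile_of g (1/2 + (1 - \<alpha>) / 2 * cdf_of g x)
      else 0)"

definition hpd_u :: "(real \<Rightarrow> real) \<Rightarrow> real \<Rightarrow> real \<Rightarrow> real" where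
  "hpd_u g \<alpha> x =
     (if x \<le> hpd_d0 g \<alpha>
      then x - quantile_of g (\<alpha> * cdf_of g x)
      else x + quantile_of g (1/2 + (1 - \<alpha>) / 2 * cdf_of g x))"

text \<open>Frequentist coverage C(theta) = P_theta(l(X) <= theta <= u(X)), X with density g(x - theta).\<close>
definition coverage :: "(real \<Rightarrow> real) \<Rightarrow> real \<Rightarrow> real \<Rightarrow> real" where
  "coverage g \<alpha> \<theta> =
     integral {x. hpd_l g \<alpha> x \<le> \<theta> \<and> \<theta> \<le> hpd_u g \<alpha> x} (\<lambda>x. g (x - \<theta>))"

end

theory Submission
  imports Defs
begin

locale dens =
  fixes g :: "real \<Rightarrow> real"
  assumes dens: "is_density g" and su: "symmetric_unimodal g"
begin

definition G where "G = cdf_of g"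

lemma g_nonneg: "0 \<le> g x" using dens by (simp add: is_density_def)
lemma g_int: "(g has_integral 1) UNIV" using dens by (simp add: is_density_def)
lemma g_sym: "g (- x) = g x" using su by (metis symmetric_unimodal_def)
lemma g_mono: "0 \<le> x \<Longrightarrow> x \<le> y \<Longrightarrow> g y \<le> g x" using su by (simp add: symmetric_unimodal_def)
lemma g_abs_mono: "\<bar>x\<bar> \<le> \<bar>y\<bar> \<Longrightarrow> g y \<le> g x"
  by (metis abs_ge_zero abs_of_nonneg abs_of_nonpos g_mono g_sym linorder_le_cases)
lemma g_le0: "g x \<le> g 0" using g_abs_mono[of 0 x] by simp

lemma g_abs_int: "g absolutely_integrable_on UNIV"
  using g_int g_nonneg nonnegative_absolutely_integrable_1 by blast

lemma g_abs_int_on: "S \<in> sets lebesgue \<Longrightarrow> g absolutely_integrable_on S"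
  using set_integrable_subset[OF g_abs_int] by blast

lemma g_int_on: "S \<in> sets lebesgue \<Longrightarrow> g integrable_on S"
  using g_abs_int_on absolutely_integrable_on_def by blast

lemma G_def2: "G x = integral {..x} g" by (simp add: G_def cdf_of_def)

lemma G_diff: assumes "x \<le> y" shows "G y - G x = integral {x..y} g"
proof -
  have "(g has_integral (integral {..x} g + integral {x..y} g)) ({..x} \<union> {x..y})"
    apply (rule has_integral_Un)
    using g_int_on[of "{..x}"] g_int_on[of "{x..y}"] assms by (auto simp: integrable_integral min_def)
  moreover have "{..x} \<union> {x..y} = {..y}" using assms by auto
  ultimately show ?thesis by (simp add: G_def2 integral_unique)
qed

lemma G_mono: "x \<le> y \<Longrightarrow> G x \<le> G y"
  using G_diff[of x y] integral_nonneg[OF g_int_on, of "{x..y}"] g_nonneg by force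

lemma int_lower: assumes "x \<le> y" "\<And>z. x \<le> z \<Longrightarrow> z \<le> y \<Longrightarrow> m \<le> g z"
  shows "(y - x) * m \<le> G y - G x"
proof -
  have "integral {x..y} (\<lambda>_. m) \<le> integral {x..y} g"
    by (rule integral_le) (use assms g_int_on in auto)
  thus ?thesis using assms(1) G_diff[OF assms(1)] by simp
qed

lemma int_upper: assumes "x \<le> y" "\<And>z. x \<le> z \<Longrightarrow> z \<le> y \<Longrightarrow> g z \<le> m"
  shows "G y - G x \<le> (y - x) * m"
proof -
  have "integral {x..y} g \<le> integral {x..y} (\<lambda>_. m)"
    by (rule integral_le) (use assms g_int_on in auto)
  thus ?thesis using assms(1) G_diff[OF assms(1)] by simp
qed

lemma G_lip: "\<bar>G y - G x\<bar> \<le> g 0 * \<bar>y - x\<bar>"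
proof (cases "x \<le> y")
  case True
  then show ?thesis using int_upper[OF True, of "g 0"] g_le0 G_mono[OF True] by (simp add: mult.commute)
next
  case False
  then show ?thesis using int_upper[of y x "g 0"] g_le0 G_mono[of y x] by (simp add: mult.commute)
qed

lemma G_cont: "continuous_on UNIV G"
proof -
  have "(g 0)-lipschitz_on UNIV G"
    by (rule lipschitz_onI) (use G_lip g_le0 g_nonneg in \<open>auto simp: dist_real_def intro: order.trans\<close>)
  thus ?thesis using lipschitz_on_continuous_on by blast
qed

lemma G_isCont: "isCont G x"
  using G_cont by (simp add: continuous_on_eq_continuous_at)

lemma G_nonneg: "0 \<le> G x"
  unfolding G_def2 by (rule integral_nonneg) (use g_int_on g_nonneg in auto)

lemma G_le1: "G x \<le> 1"
proof -
  have "integral {..x} g \<le> integral UNIV g"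
    by (rule integral_subset_le) (use g_int_on g_nonneg g_int in auto)
  thus ?thesis using g_int by (simp add: G_def2 integral_unique)
qed

lemma G_big: assumes "0 < e" shows "\<exists>B\<ge>0. G B > 1 - e \<and> G (- B) < e"
proof -
  obtain B where B: "B > 0" "\<And>a b. ball 0 B \<subseteq> cbox a b \<Longrightarrow> norm (integral (cbox a b) g - 1) < e"
    using g_int[unfolded has_integral_alt'] assms by auto
  have "ball 0 B \<subseteq> cbox (-B) B" by (auto simp: dist_real_def)
  then have "\<bar>integral {-B..B} g - 1\<bar> < e" using B(2) by fastforce
  moreover have "G B - G (-B) = integral {-B..B} g" using G_diff[of "-B" B] B by simp
  ultimately show ?thesis using B G_nonneg[of "-B"] G_le1[of B] by (intro exI[of _ B]) auto
qed

lemma G_big': assumes "0 < e" shows "\<exists>B\<ge>0. \<forall>z\<ge>B. G z > 1 - e \<and> G (- z) < e"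
proof -
  obtain B where "B \<ge> 0" "G B > 1 - e" "G (-B) < e" using G_big[OF assms] by auto
  have "\<forall>z\<ge>B. G z > 1 - e \<and> G (- z) < e"
  proof (intro allI impI)
    fix z assume z: "B \<le> z"
    have "G B \<le> G z" "G (-z) \<le> G (-B)" using G_mono z by auto
    then show "G z > 1 - e \<and> G (- z) < e" using \<open>G B > 1 - e\<close> \<open>G (-B) < e\<close> by linarith
  qed
  then show ?thesis using \<open>B \<ge> 0\<close> by blast
qed

lemma G_sym: "G (- x) = 1 - G x"
proof -
  have key: "G (-x) + G x = G B + G (-B)" if "B \<ge> \<bar>x\<bar>" for B
  proof -
    have "integral {-B..-x} (\<lambda>z. g (-z)) = integral {x..B} g" by (rule Henstock_Kurzweil_Integration.integral_reflect_real)
    moreover have "integral {-B..-x} (\<lambda>z. g (-z)) = integral {-B..-x} g" using g_sym by simp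
    moreover have "x \<le> B" using that by auto
    ultimately show ?thesis using G_diff[of "-B" "-x"] G_diff[of x B] by auto
  qed
  have "\<bar>G (-x) + G x - 1\<bar> < e" if e_pos: "e > 0" for e
  proof -
    obtain B where B: "B \<ge> 0" "\<forall>z\<ge>B. G z > 1 - e \<and> G (- z) < e" using G_big'[OF e_pos] by auto
    define z where "z = max B \<bar>x\<bar>"
    have "G z > 1 - e" "G (-z) < e" using B by (auto simp: z_def)
    moreover have "G (-x) + G x = G z + G (-z)" by (rule key) (simp add: z_def)
    ultimately show ?thesis using G_le1[of z] G_nonneg[of "-z"] by (simp add: abs_less_iff)
  qed
  then have "\<bar>G (-x) + G x - 1\<bar> = 0"
    by (metis abs_ge_zero order_less_irrefl order_le_less)
  then show ?thesis by simp
qed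

lemma G0: "G 0 = 1/2" using G_sym[of 0] by simp

lemma G_flat: assumes "x < y" "G x = G y" shows "G x = 0 \<or> G y = 1"
proof (cases "0 \<le> (x+y)/2")
  case True
  define m where "m = (x+y)/2"
  have "(y - m) * g y \<le> G y - G m"
    by (rule int_lower) (use assms True g_mono in \<open>auto simp: m_def\<close>)
  moreover have "G x \<le> G m" "G m \<le> G y" using G_mono[of x m] G_mono[of m y] assms by (auto simp: m_def)
  ultimately have "(y - m) * g y \<le> 0" using assms by linarith
  moreover have "y - m > 0" using assms by (simp add: m_def)
  ultimately have gy: "g y = 0" using g_nonneg[of y] by (simp add: mult_le_0_iff)
  have "G z = G y" if "z \<ge> y" for z
  proof -
    have "G z - G y \<le> (z - y) * 0"
      by (rule int_upper) (use that g_mono[of y] gy True assms in \<open>auto simp: m_def\<close>)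
    then show ?thesis using G_mono[OF that] by simp
  qed
  moreover have "\<bar>G y - 1\<bar> < e" if e_pos: "e > 0" for e
  proof -
    obtain B where B: "B \<ge> 0" "\<forall>z\<ge>B. G z > 1 - e \<and> G (- z) < e" using G_big'[OF e_pos] by auto
    have "G (max B y) > 1 - e" using B by auto
    then show ?thesis using calculation[of "max B y"] G_le1[of y] that by auto
  qed
  ultimately have "\<bar>G y - 1\<bar> = 0" by (metis abs_ge_zero order_less_irrefl order_le_less)
  then show ?thesis by simp
next
  case False
  define m where "m = (x+y)/2"
  have "(m - x) * g x \<le> G m - G x"
    by (rule int_lower) (use assms False g_abs_mono in \<open>auto simp: m_def\<close>)
  moreover have "G x \<le> G m" "G m \<le> G y" using G_mono[of x m] G_mono[of m y] assms by (auto simp: m_def)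
  ultimately have "(m - x) * g x \<le> 0" using assms by linarith
  moreover have "m - x > 0" using assms by (simp add: m_def)
  ultimately have gx: "g x = 0" using g_nonneg[of x] by (simp add: mult_le_0_iff)
  have "G z = G x" if "z \<le> x" for z
  proof -
    have "G x - G z \<le> (x - z) * 0"
      by (rule int_upper) (use that g_abs_mono[of x] gx False assms in \<open>auto simp: m_def\<close>)
    then show ?thesis using G_mono[OF that] by simp
  qed
  moreover have "\<bar>G x\<bar> < e" if e_pos: "e > 0" for e
  proof -
    obtain B where B: "B \<ge> 0" "\<forall>z\<ge>B. G z > 1 - e \<and> G (- z) < e" using G_big'[OF e_pos] by auto
    have "G (- max B (-x)) < e" using B by auto
    then show ?thesis using calculation[of "- max B (-x)"] G_nonneg[of x] that by auto
  qed
  ultimately have "\<bar>G x\<bar> = 0" by (metis abs_ge_zero order_less_irrefl order_le_less)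
  then show ?thesis by simp
qed

lemma G_strict: assumes "x < y" "0 < G y" "G x < 1" shows "G x < G y"
  using G_flat[OF assms(1)] G_mono[of x y] assms by force

definition Q where "Q = quantile_of g"

lemma Q_def2: "Q p = Inf {x. p \<le> G x}" by (simp add: Q_def quantile_of_def G_def)

lemma Q_facts: assumes "0 < p" "p < 1"
  shows "{x. p \<le> G x} \<noteq> {}" "bdd_below {x. p \<le> G x}" "closed {x. p \<le> G x}"
proof -
  obtain B where B: "B \<ge> 0" "\<forall>z\<ge>B. G z > 1 - min p (1-p) \<and> G (- z) < min p (1-p)"
    using G_big'[of "min p (1-p)"] assms by auto
  show "{x. p \<le> G x} \<noteq> {}" using B by (auto intro!: exI[of _ B])
  show "bdd_below {x. p \<le> G x}"
  proof (rule bdd_belowI)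
    fix x assume "x \<in> {x. p \<le> G x}"
    then have "p \<le> G x" by simp
    moreover have "G (-B) < p" using B by auto
    ultimately show "- B \<le> x" using G_mono[of x "-B"] by linarith
  qed
  show "closed {x. p \<le> G x}"
    using closed_Collect_le[OF continuous_on_const G_cont] by simp
qed

lemma G_Q: assumes "0 < p" "p < 1" shows "G (Q p) = p"
proof -
  have mem: "Q p \<in> {x. p \<le> G x}" unfolding Q_def2 by (rule closed_contains_Inf[OF Q_facts[OF assms]])
  obtain B where B: "B \<ge> 0" "\<forall>z\<ge>B. G z > 1 - min p (1-p) \<and> G (- z) < min p (1-p)"
    using G_big'[of "min p (1-p)"] assms by auto
  have low: "G (- B) \<le> p" using B by auto
  have "- B \<le> Q p"
  proof (rule ccontr)
    assume "\<not> - B \<le> Q p"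
    then have "G (Q p) \<le> G (-B)" using G_mono by simp
    moreover have "G (-B) < p" using B by auto
    ultimately show False using mem by simp
  qed
  moreover have "p \<le> G (Q p)" using mem by simp
  moreover have "continuous_on {-B..Q p} G" using continuous_on_subset[OF G_cont] by blast
  ultimately obtain y where y: "- B \<le> y" "y \<le> Q p" "G y = p"
    using IVT'[of G "-B" p "Q p"] low by blast
  then have "Q p \<le> y" unfolding Q_def2 using Q_facts[OF assms] by (intro cInf_lower) auto
  then show ?thesis using y by simp
qed

lemma Q_le_iff: assumes "0 < p" "p < 1" shows "Q p \<le> y \<longleftrightarrow> p \<le> G y"
proof
  assume "Q p \<le> y" then show "p \<le> G y" using G_mono[of "Q p" y] G_Q[OF assms] by simp
next
  assume "p \<le> G y" then show "Q p \<le> y" unfolding Q_def2 using Q_facts[OF assms] by (intro cInf_lower) auto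
qed

lemma le_Q_iff: assumes "0 < p" "p < 1" shows "y \<le> Q p \<longleftrightarrow> G y \<le> p"
proof
  assume "y \<le> Q p" then show "G y \<le> p" using G_mono[of y "Q p"] G_Q[OF assms] by simp
next
  assume a: "G y \<le> p"
  show "y \<le> Q p"
  proof (rule ccontr)
    assume "\<not> y \<le> Q p"
    then have "Q p < y" by simp
    moreover have "G (Q p) = G y" using G_mono[of "Q p" y] a G_Q[OF assms] \<open>Q p < y\<close> by simp
    ultimately have "G (Q p) = 0 \<or> G y = 1" by (rule G_flat)
    then show False using G_Q[OF assms] assms \<open>G (Q p) = G y\<close> by simp
  qed
qed

lemma g_between: "p \<le> w \<Longrightarrow> w \<le> q \<Longrightarrow> min (g p) (g q) \<le> g w"
proof (cases "0 \<le> w")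
  case True
  assume "p \<le> w" "w \<le> q"
  then have "g q \<le> g w" using g_abs_mono[of w q] True by simp
  then show ?thesis by simp
next
  case False
  assume "p \<le> w" "w \<le> q"
  then have "g p \<le> g w" using g_abs_mono[of w p] False by simp
  then show ?thesis by simp
qed

lemma shift_int: assumes "x \<le> y"
  shows "((\<lambda>z. g (z + c)) has_integral (G (y + c) - G (x + c))) {x..y}"
proof -
  have "(g has_integral (G (y + c) - G (x + c))) (cbox (x + c) (y + c))"
    using G_diff[of "x+c" "y+c"] assms g_int_on[of "{x+c..y+c}"] by (simp add: integrable_integral)
  from has_integral_affinity'[OF this, of 1 c] show ?thesis by simp
qed

end

locale lcdens = dens +
  assumes lc: "logconcave g"
begin

lemma lc_pw: assumes "0 \<le> th" "u \<le> v" shows "g (u - th) * g v \<le> g u * g (v - th)"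
proof (cases "g (u - th) = 0 \<or> g v = 0 \<or> th = 0")
  case True
  then show ?thesis using g_nonneg by auto
next
  case False
  define p where "p = u - th"
  define q where "q = v"
  have gp: "0 < g p" "0 < g q" using False g_nonneg[of "u-th"] g_nonneg[of v] by (auto simp: p_def q_def)
  have th: "th > 0" using False assms by auto
  define D where "D = q - p"
  have D: "D > 0" using th assms by (simp add: D_def p_def q_def)
  define t where "t = th / D"
  have t01: "0 \<le> t" "t \<le> 1" using th D assms by (auto simp: t_def D_def p_def q_def divide_le_eq)
  have tD: "t * (q - p) = th" using D by (simp add: t_def D_def)
  have "(1 - t) *\<^sub>R p + t *\<^sub>R q = p + t * (q - p)" by (simp add: algebra_simps)
  then have u_eq: "u = (1 - t) *\<^sub>R p + t *\<^sub>R q" using tD by (simp add: p_def)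
  have "(1 - (1 - t)) *\<^sub>R p + (1 - t) *\<^sub>R q = q - t * (q - p)" by (simp add: algebra_simps)
  then have v_eq: "v - th = (1 - (1 - t)) *\<^sub>R p + (1 - t) *\<^sub>R q" using tD by (simp add: q_def)
  have A: "p \<in> {x. 0 < g x}" "q \<in> {x. 0 < g x}" using gp by auto
  have cc: "concave_on {x. 0 < g x} (\<lambda>x. ln (g x))" using lc by (simp add: logconcave_def)
  have gu: "0 < g u" using g_between[of p u q] gp assms th by (auto simp: p_def q_def)
  have gv: "0 < g (v - th)" using g_between[of p "v - th" q] gp assms th by (auto simp: p_def q_def)
  have i1: "ln (g u) \<ge> (1 - t) * ln (g p) + t * ln (g q)"
    using concave_onD[OF cc t01 A] u_eq by simp
  have i2: "ln (g (v - th)) \<ge> (1 - (1 - t)) * ln (g p) + (1 - t) * ln (g q)"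
    using concave_onD[OF cc _ _ A, of "1 - t"] t01 v_eq by simp
  have "ln (g p * g q) \<le> ln (g u * g (v - th))"
    using i1 i2 gp gu gv by (simp add: ln_mult algebra_simps)
  then have "g p * g q \<le> g u * g (v - th)" using gp gu gv by simp
  then show ?thesis by (simp add: p_def q_def)
qed

lemma ratio_A: assumes "0 \<le> th" "x \<le> v" shows "g v * G (x - th) \<le> g (v - th) * G x"
proof -
  have key: "g v * (G (x - th) - G (-B - th)) \<le> g (v - th) * (G x - G (-B))" if "-B \<le> x" for B
  proof -
    have "((\<lambda>u. g (u + - th) * g v) has_integral ((G (x + - th) - G (-B + - th)) * g v)) {-B..x}"
      by (rule has_integral_mult_left[OF shift_int[OF that]])
    moreover have "((\<lambda>u. g (u + 0) * g (v - th)) has_integral ((G (x + 0) - G (-B + 0)) * g (v - th))) {-B..x}"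
      by (rule has_integral_mult_left[OF shift_int[OF that]])
    ultimately have "(G (x + - th) - G (-B + - th)) * g v \<le> (G (x + 0) - G (-B + 0)) * g (v - th)"
      by (rule has_integral_le) (use lc_pw assms in auto)
    then show ?thesis by (simp add: mult.commute)
  qed
  have "g v * G (x - th) \<le> g (v - th) * G x + g v * e" if e: "e > 0" for e
  proof -
    obtain B where B: "B \<ge> 0" "\<forall>z\<ge>B. G z > 1 - e \<and> G (- z) < e" using G_big'[OF e] by auto
    define z where "z = max B (-x)"
    have "G (-z) < e" using B by (auto simp: z_def)
    moreover have "G (-z - th) \<le> G (-z)" using G_mono assms by simp
    moreover have "-z \<le> x" by (simp add: z_def)
    ultimately have "G (x - th) - e \<le> G (x - th) - G (-z - th)" by linarith
    then have "g v * (G (x - th) - e) \<le> g v * (G (x - th) - G (-z - th))"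
      using g_nonneg[of v] by (rule mult_left_mono)
    also have "\<dots> \<le> g (v - th) * (G x - G (-z))" using key[of z] \<open>-z \<le> x\<close> by simp
    finally have "g v * (G (x - th) - e) \<le> g (v - th) * (G x - G (-z))" .
    also have "\<dots> \<le> g (v - th) * G x" using g_nonneg[of "v - th"] G_nonneg[of "-z"] by (simp add: mult_left_mono)
    finally show ?thesis by (simp add: algebra_simps)
  qed
  note E = this
  show ?thesis
  proof (cases "g v = 0")
    case True
    then show ?thesis using g_nonneg[of "v - th"] G_nonneg[of x] by simp
  next
    case False
    then have gv: "g v > 0" using g_nonneg[of v] by simp
    show ?thesis
    proof (rule field_le_epsilon)
      fix e :: real assume "0 < e"
      then have "g v * G (x - th) \<le> g (v - th) * G x + g v * (e / g v)" using gv by (intro E) simp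
      then show "g v * G (x - th) \<le> g (v - th) * G x + e" using gv by simp
    qed
  qed
qed

lemma ratio_G: assumes "0 \<le> th" "x \<le> y" shows "G (x - th) * G y \<le> G x * G (y - th)"
proof -
  have "((\<lambda>v. g (v + 0) * G (x - th)) has_integral ((G (y + 0) - G (x + 0)) * G (x - th))) {x..y}"
    by (rule has_integral_mult_left[OF shift_int[OF assms(2)]])
  moreover have "((\<lambda>v. g (v + - th) * G x) has_integral ((G (y + - th) - G (x + - th)) * G x)) {x..y}"
    by (rule has_integral_mult_left[OF shift_int[OF assms(2)]])
  ultimately have "(G (y + 0) - G (x + 0)) * G (x - th) \<le> (G (y + - th) - G (x + - th)) * G x"
    by (rule has_integral_le) (use ratio_A assms in \<open>auto simp: mult.commute\<close>)
  then show ?thesis by (simp add: algebra_simps)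
qed

end

locale setting = lcdens +
  fixes al :: real
  assumes al0: "0 < al" and al1: "al < 1"
begin

definition "d0 = Q (1 / (1 + al))"
definition "d1 = Q (1 - al / 2)"
definition "cc = (1 - al) / 2"
definition "H th x = G (x - th) - al * G x"
definition "F th x = G (x - th) - cc * G x"
definition "aa th = Sup {x. x \<le> d0 \<and> H th x < 0}"
definition "bb th = Inf {x. d0 \<le> x \<and> 1/2 < F th x}"

lemma Gd0: "G d0 = 1 / (1 + al)" unfolding d0_def using al0 al1 by (intro G_Q) (auto simp: field_simps)
lemma Gd1: "G d1 = 1 - al / 2" unfolding d1_def using al0 al1 by (intro G_Q) auto
lemma Gmd0: "G (- d0) = al / (1 + al)" using G_sym[of d0] Gd0 al0 by (simp add: field_simps)
lemma Gmd1: "G (- d1) = al / 2" using G_sym[of d1] Gd1 by simp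
lemma d0_pos: "0 < d0"
proof -
  have "1/2 < 1 / (1 + al)" using al0 al1 by (simp add: field_simps)
  then have "G 0 < G d0" using G0 Gd0 by simp
  then show ?thesis using G_mono[of d0 0] by force
qed
lemma d0_le_d1: "d0 \<le> d1"
proof -
  have "al * al \<le> al * 1" using al0 al1 by (intro mult_left_mono) auto
  then have "1 \<le> (1 - al / 2) * (1 + al)" by (simp add: algebra_simps)
  then have "1 / (1 + al) \<le> 1 - al / 2" using al0 by (simp add: divide_le_eq)
  then show ?thesis unfolding d1_def using Gd0 al0 al1 by (subst le_Q_iff) auto
qed

lemma H_cont: "continuous_on UNIV (H th)"
  unfolding H_def[abs_def] by (intro continuous_intros continuous_on_compose2[OF G_cont]) auto
lemma F_cont: "continuous_on UNIV (F th)"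
  unfolding F_def[abs_def] by (intro continuous_intros continuous_on_compose2[OF G_cont]) auto

context
  fixes th assumes th1: "d1 < th" and th2: "th < 2 * d0"
begin

lemma th_pos: "0 < th" using th1 d0_pos d0_le_d1 by linarith

lemma L0: "H th 0 < 0"
proof -
  have "G (- th) < G (- d1)"
    by (rule G_strict) (use th1 Gmd1 al0 al1 G_mono[of "-th" "-d1"] in auto)
  then have "G (- th) < al * G 0" unfolding G0 using Gmd1 by linarith
  then show ?thesis by (simp add: H_def)
qed

lemma L1: "0 < H th d0"
proof -
  have p: "0 < G (- d0)" "G (- d0) < 1" unfolding Gmd0 using al0 al1 by (auto simp: field_simps)
  have "G (- d0) \<le> G (d0 - th)" using G_mono th2 by simp
  then have "G (- d0) < G (d0 - th)" using p th2 by (intro G_strict) auto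
  moreover have "al * G d0 = G (- d0)" unfolding Gd0 Gmd0 by simp
  ultimately show ?thesis unfolding H_def by linarith
qed

definition "Ls = {x. x \<le> d0 \<and> H th x < 0}"

lemma Ls_ne: "Ls \<noteq> {}"
proof -
  have "0 \<in> Ls" using L0 d0_pos by (simp add: Ls_def)
  then show ?thesis by blast
qed

lemma Ls_bdd: "bdd_above Ls" by (auto simp: Ls_def intro!: bdd_aboveI[of _ d0])

lemma aa_eq: "aa th = Sup Ls" by (simp add: aa_def Ls_def)

lemma aa_ge0: "0 \<le> aa th" unfolding aa_eq using L0 d0_pos Ls_bdd by (intro cSup_upper) (auto simp: Ls_def)
lemma aa_le: "aa th \<le> d0" unfolding aa_eq using Ls_ne by (intro cSup_least) (auto simp: Ls_def)

lemma L3: assumes "x \<le> d0" "aa th < x" shows "0 \<le> H th x"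
proof (rule ccontr)
  assume "\<not> 0 \<le> H th x"
  then have "x \<in> Ls" using assms by (simp add: Ls_def)
  then have "x \<le> aa th" unfolding aa_eq by (rule cSup_upper[OF _ Ls_bdd])
  then show False using assms by simp
qed

lemma L4: assumes "x < aa th" "0 < G x" shows "H th x < 0"
proof -
  obtain y where y: "y \<in> Ls" "x < y" using assms(1) less_cSup_iff[OF Ls_ne Ls_bdd] aa_eq by auto
  have Hy: "G (y - th) < al * G y" using y by (simp add: Ls_def H_def)
  have r: "G (x - th) * G y \<le> G x * G (y - th)" using ratio_G[of th x y] th_pos y by simp
  show ?thesis
  proof (rule ccontr)
    assume "\<not> H th x < 0"
    then have "al * G x \<le> G (x - th)" by (simp add: H_def)
    then have "al * G x * G y \<le> G (x - th) * G y" using G_nonneg[of y] by (simp add: mult_right_mono)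
    also have "\<dots> \<le> G x * G (y - th)" by (rule r)
    also have "\<dots> < G x * (al * G y)" using Hy assms(2) by simp
    finally show False by simp
  qed
qed

lemma L5: "H th (aa th) = 0" "aa th < d0"
proof -
  have "aa th \<in> closure Ls" unfolding aa_eq by (rule closure_contains_Sup[OF Ls_ne Ls_bdd])
  also have "closure Ls \<subseteq> {x. H th x \<le> 0}"
  proof (rule closure_minimal)
    show "closed {x. H th x \<le> 0}" by (rule closed_Collect_le[OF H_cont continuous_on_const])
  qed (auto simp: Ls_def)
  finally have le: "H th (aa th) \<le> 0" by simp
  then show lt: "aa th < d0" using aa_le L1 by (cases "aa th = d0") auto
  have "aa th \<in> closure {aa th<..d0}" using lt by simp
  also have "closure {aa th<..d0} \<subseteq> {x. 0 \<le> H th x}"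
  proof (rule closure_minimal)
    show "closed {x. 0 \<le> H th x}" by (rule closed_Collect_le[OF continuous_on_const H_cont])
  qed (use L3 in auto)
  finally show "H th (aa th) = 0" using le by simp
qed

lemma shift_ge: assumes "th / 2 \<le> x" "x \<le> y" "0 \<le> th" shows "G y - G x \<le> G (y - th) - G (x - th)"
proof -
  have "((\<lambda>z. g (z + 0)) has_integral (G (y + 0) - G (x + 0))) {x..y}" by (rule shift_int[OF assms(2)])
  moreover have "((\<lambda>z. g (z + - th)) has_integral (G (y + - th) - G (x + - th))) {x..y}" by (rule shift_int[OF assms(2)])
  ultimately have "G (y + 0) - G (x + 0) \<le> G (y + - th) - G (x + - th)"
    by (rule has_integral_le) (use assms in \<open>auto intro!: g_abs_mono\<close>)
  then show ?thesis by simp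
qed

lemma F_mono: assumes "d0 \<le> x" "x \<le> y" shows "F th x \<le> F th y"
proof -
  have h: "th / 2 \<le> x" using assms th2 by linarith
  have A: "G y - G x \<le> G (y - th) - G (x - th)" using shift_ge[OF h assms(2)] th_pos by linarith
  have B: "0 \<le> G y - G x" using G_mono[OF assms(2)] by linarith
  have C: "cc \<le> 1" "0 \<le> cc" using al0 al1 by (auto simp: cc_def)
  have "cc * (G y - G x) \<le> 1 * (G y - G x)" using B C by (intro mult_right_mono) auto
  then have "cc * G y - cc * G x \<le> G y - G x" by (simp add: right_diff_distrib)
  then show ?thesis unfolding F_def using A by linarith
qed

lemma R0: "F th d0 < 1/2"
proof -
  have lt: "d0 - th < 0" using th1 d0_le_d1 by simp
  have "G (d0 - th) \<le> G 0" using G_mono lt by simp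
  then have "G (d0 - th) < G 0" using lt G0 by (intro G_strict) auto
  moreover have "0 \<le> cc * G d0" using al1 G_nonneg by (simp add: cc_def)
  ultimately show ?thesis using G0 by (simp add: F_def)
qed

definition "Rs = {x. d0 \<le> x \<and> 1/2 < F th x}"

lemma Rs_ne: "Rs \<noteq> {}"
proof -
  have "G d1 \<le> G (d1 + 1)" using G_mono by simp
  then have "G d1 < G (d1 + 1)" using Gd1 al0 al1 by (intro G_strict) auto
  moreover have "cc * G (d1 + 1 + th) \<le> cc" using G_le1 al1 by (simp add: cc_def)
  ultimately have "1/2 < F th (d1 + 1 + th)" using Gd1 by (simp add: F_def cc_def)
  moreover have "d0 \<le> d1 + 1 + th" using d0_le_d1 th_pos by simp
  ultimately show ?thesis by (auto simp: Rs_def)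
qed

lemma Rs_bdd: "bdd_below Rs" by (auto simp: Rs_def intro!: bdd_belowI[of _ d0])

lemma bb_eq: "bb th = Inf Rs" by (simp add: bb_def Rs_def)

lemma bb_ge: "d0 \<le> bb th" unfolding bb_eq using Rs_ne by (intro cInf_greatest) (auto simp: Rs_def)

lemma R3: assumes "d0 \<le> x" "x < bb th" shows "F th x \<le> 1/2"
proof (rule ccontr)
  assume "\<not> F th x \<le> 1/2"
  then have "x \<in> Rs" using assms by (simp add: Rs_def)
  then have "bb th \<le> x" unfolding bb_eq by (rule cInf_lower[OF _ Rs_bdd])
  then show False using assms by simp
qed

lemma R4: assumes "bb th < x" shows "1/2 < F th x"
proof -
  obtain y where y: "y \<in> Rs" "y < x" using assms cInf_less_iff[OF Rs_ne Rs_bdd] bb_eq by auto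
  then have "d0 \<le> y" "1/2 < F th y" by (auto simp: Rs_def)
  then show ?thesis using F_mono[of y x] y(2) by linarith
qed

lemma R5: "F th (bb th) = 1/2" "d0 < bb th"
proof -
  have "bb th \<in> closure Rs" unfolding bb_eq by (rule closure_contains_Inf[OF Rs_ne Rs_bdd])
  also have "closure Rs \<subseteq> {x. 1/2 \<le> F th x}"
  proof (rule closure_minimal)
    show "closed {x. 1/2 \<le> F th x}" by (rule closed_Collect_le[OF continuous_on_const F_cont])
  qed (auto simp: Rs_def)
  finally have ge: "1/2 \<le> F th (bb th)" by simp
  then show lt: "d0 < bb th" using bb_ge R0 by (cases "bb th = d0") auto
  have "bb th \<in> closure {d0..<bb th}" using lt by simp
  also have "closure {d0..<bb th} \<subseteq> {x. F th x \<le> 1/2}"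
  proof (rule closure_minimal)
    show "closed {x. F th x \<le> 1/2}" by (rule closed_Collect_le[OF F_cont continuous_on_const])
  qed (use R3 in auto)
  finally show "F th (bb th) = 1/2" using ge by simp
qed

lemma t_ge: "d0 \<le> bb th - th"
proof (rule ccontr)
  assume a: "\<not> d0 \<le> bb th - th"
  have eq: "G (bb th - th) = 1/2 + cc * G (bb th)" using R5 by (simp add: F_def)
  have "cc * G (bb th) \<le> cc" using G_le1 al1 by (simp add: cc_def)
  then have "G (bb th - th) < 1" using eq al0 by (simp add: cc_def)
  moreover have "0 < G d0" using Gd0 al0 by simp
  ultimately have "G (bb th - th) < G d0"
    using a by (intro G_strict) auto
  moreover note eq
  moreover have "G d0 \<le> G (bb th)" using G_mono R5 by simp
  moreover have "1/2 + cc * G d0 = G d0" using Gd0 al0 by (simp add: cc_def field_simps)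
  moreover have "0 \<le> cc" using al1 by (simp add: cc_def)
  ultimately have "cc * G d0 \<le> cc * G (bb th)" by (simp add: mult_left_mono)
  then show False using \<open>G (bb th - th) < G d0\<close> eq \<open>1/2 + cc * G d0 = G d0\<close> by linarith
qed

lemma g_zero: assumes "G x = 0" shows "g (x - th) = 0"
proof (rule ccontr)
  assume ne: "g (x - th) \<noteq> 0"
  have x0: "x < 0"
  proof (rule ccontr)
    assume "\<not> x < 0"
    then have "G 0 \<le> G x" using G_mono by simp
    then show False using assms G0 by simp
  qed
  have "(x - (x - th)) * g (x - th) \<le> G x - G (x - th)"
    by (rule int_lower) (use th_pos x0 in \<open>auto intro!: g_abs_mono\<close>)
  moreover have "0 < g (x - th)" using ne g_nonneg[of "x - th"] by simp
  moreover have "0 < (x - (x - th)) * g (x - th)" using th_pos \<open>0 < g (x - th)\<close> by simp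
  ultimately have "0 < G x - G (x - th)" by linarith
  then show False using assms G_nonneg[of "x - th"] by simp
qed

lemma cov_eq: "coverage g al th = G (bb th - th) - G (aa th - th)"
proof -
  define A where "A = {x. hpd_l g al x \<le> th \<and> th \<le> hpd_u g al x}"
  define f where "f = (\<lambda>x. g (x - th))"
  have hd0: "hpd_d0 g al = d0" by (simp add: hpd_d0_def d0_def Q_def)
  have ab: "aa th < bb th" using L5 R5 by simp
  have pt: "(if x \<in> A then f x else 0) = (if x \<in> {aa th..bb th} then f x else 0)"
    if x: "x \<notin> {aa th, bb th}" for x
  proof (cases "x \<le> d0")
    case True
    have l: "hpd_l g al x = 0" using True by (simp add: hpd_l_def hd0)
    have u: "hpd_u g al x = x - Q (al * G x)" using True by (simp add: hpd_u_def hd0 Q_def G_def)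
    have xab: "x \<in> {aa th..bb th} \<longleftrightarrow> aa th \<le> x" using True R5 by auto
    show ?thesis
    proof (cases "G x = 0")
      case True
      then show ?thesis using g_zero by (simp add: f_def)
    next
      case False
      then have Gp: "0 < G x" using G_nonneg[of x] by simp
      have "al * G x \<le> al * 1" using G_le1[of x] al0 by (intro mult_left_mono) auto
      then have "al * G x < 1" using al1 by linarith
      moreover have "0 < al * G x" using Gp al0 by simp
      ultimately have p: "0 < al * G x" "al * G x < 1" by auto
      have "x \<in> A \<longleftrightarrow> 0 \<le> H th x"
        unfolding A_def using l u th_pos Q_le_iff[OF p, of "x - th"] by (auto simp: H_def)
      moreover have "0 \<le> H th x \<longleftrightarrow> aa th \<le> x"
        using L3[OF True] L4[OF _ Gp] x by (cases "aa th < x") auto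
      ultimately show ?thesis using xab by simp
    qed
  next
    case False
    define p where "p = 1/2 + cc * G x"
    have "cc * G x \<le> cc * 1" using G_le1[of x] al1 by (intro mult_left_mono) (auto simp: cc_def)
    moreover have "0 \<le> cc * G x" using G_nonneg[of x] al1 by (simp add: cc_def)
    ultimately have p: "0 < p" "p < 1" using al0 by (auto simp: p_def cc_def)
    have l: "hpd_l g al x = x - Q p" using False by (simp add: hpd_l_def hd0 p_def cc_def Q_def G_def)
    have u: "hpd_u g al x = x + Q p" using False by (simp add: hpd_u_def hd0 p_def cc_def Q_def G_def)
    have "G (th - x) \<le> G d0" using G_mono False th2 by simp
    moreover have "G d0 \<le> p"
    proof -
      have "G d0 \<le> G x" using G_mono False by simp
      then have "cc * G d0 \<le> cc * G x" using al1 by (intro mult_left_mono) (auto simp: cc_def)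
      moreover have "1/2 + cc * G d0 = G d0" using Gd0 al0 by (simp add: cc_def field_simps)
      ultimately show ?thesis by (simp add: p_def)
    qed
    ultimately have "th - x \<le> Q p" using le_Q_iff[OF p] by simp
    then have u2: "th \<le> hpd_u g al x" using u by simp
    have "x \<in> A \<longleftrightarrow> F th x \<le> 1/2"
      unfolding A_def using u2 l le_Q_iff[OF p, of "x - th"] by (auto simp: F_def p_def)
    moreover have xab: "x \<in> {aa th..bb th} \<longleftrightarrow> x \<le> bb th" using False L5 by auto
    moreover have "F th x \<le> 1/2 \<longleftrightarrow> x \<le> bb th"
      using R3[of x] R4[of x] False x by (cases "x < bb th") auto
    ultimately show ?thesis by simp
  qed
  have "coverage g al th = integral A f" by (simp add: coverage_def A_def f_def)
  also have "\<dots> = integral UNIV (\<lambda>x. if x \<in> A then f x else 0)" by (simp add: integral_restrict_UNIV)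
  also have "\<dots> = integral UNIV (\<lambda>x. if x \<in> {aa th..bb th} then f x else 0)"
    by (rule integral_spike[of "{aa th, bb th}"]) (use pt in auto)
  also have "\<dots> = integral {aa th..bb th} f" by (rule Henstock_Kurzweil_Integration.integral_restrict_UNIV)
  also have "\<dots> = G (bb th + - th) - G (aa th + - th)"
    using shift_int[of "aa th" "bb th" "- th"] ab unfolding f_def by (simp add: integral_unique)
  finally show ?thesis by simp
qed

end

lemma lemK: assumes "d1 < th" shows "g (d0 + th) * (1 - al) \<le> g d0 * (al * (1 + al))"
proof -
  have th0: "0 \<le> th" using assms d0_pos d0_le_d1 by linarith
  have "((\<lambda>x. g (x + 0) * g (d0 + th)) has_integral ((G (d0 + 0) - G (0 + 0)) * g (d0 + th))) {0..d0}"
    by (rule has_integral_mult_left[OF shift_int]) (use d0_pos in simp)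
  moreover have "((\<lambda>x. g (x + th) * g d0) has_integral ((G (d0 + th) - G (0 + th)) * g d0)) {0..d0}"
    by (rule has_integral_mult_left[OF shift_int]) (use d0_pos in simp)
  ultimately have "(G (d0 + 0) - G (0 + 0)) * g (d0 + th) \<le> (G (d0 + th) - G (0 + th)) * g d0"
  proof (rule has_integral_le)
    fix x assume "x \<in> {0..d0}"
    then show "g (x + 0) * g (d0 + th) \<le> g (x + th) * g d0"
      using lc_pw[OF th0, of "x + th" "d0 + th"] by simp
  qed
  then have i: "(G d0 - G 0) * g (d0 + th) \<le> (G (d0 + th) - G th) * g d0" by simp
  have "G d1 \<le> G th" using G_mono assms by simp
  then have "G (d0 + th) - G th \<le> al / 2" using G_le1[of "d0 + th"] Gd1 by linarith
  then have "(G (d0 + th) - G th) * g d0 \<le> (al / 2) * g d0" using g_nonneg by (rule mult_right_mono)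
  with i have "(G d0 - G 0) * g (d0 + th) \<le> (al / 2) * g d0" by linarith
  moreover have "G d0 - G 0 = (1 - al) / (2 * (1 + al))" using Gd0 G0 al0 by (simp add: field_simps)
  ultimately have "(2 * (1 + al)) * (((1 - al) / (2 * (1 + al))) * g (d0 + th)) \<le> (2 * (1 + al)) * ((al / 2) * g d0)"
    using al0 by (intro mult_left_mono) auto
  moreover have "2 * (1 + al) \<noteq> 0" using al0 by simp
  then have "(2 * (1 + al)) * (((1 - al) / (2 * (1 + al))) * g (d0 + th)) = g (d0 + th) * (1 - al)"
    by simp
  moreover have "(2 * (1 + al)) * ((al / 2) * g d0) = g d0 * (al * (1 + al))"
    by (simp add: field_simps)
  ultimately show ?thesis by linarith
qed

lemma main_mono: assumes "d1 < th1" "th1 \<le> th2" "th2 < 2 * d0"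
  shows "coverage g al th2 \<le> coverage g al th1"
proof (cases "th1 = th2")
  case True then show ?thesis by simp
next
  case False
  have t1: "d1 < th1" "th1 < 2 * d0" and t2: "d1 < th2" "th2 < 2 * d0" using assms by auto
  define dl where "dl = th2 - th1"
  have dl: "0 < dl" using False assms by (simp add: dl_def)
  define a1 where "a1 = aa th1"
  define a2 where "a2 = aa th2"
  define b1 where "b1 = bb th1"
  define b2 where "b2 = bb th2"
  have Ha1: "G (a1 - th1) = al * G a1" using L5(1)[OF t1] by (simp add: H_def a1_def)
  have Ha2: "G (a2 - th2) = al * G a2" using L5(1)[OF t2] by (simp add: H_def a2_def)
  have Fb1: "G (b1 - th1) = 1/2 + cc * G b1" using R5(1)[OF t1] by (simp add: F_def b1_def)
  have Fb2: "G (b2 - th2) = 1/2 + cc * G b2" using R5(1)[OF t2] by (simp add: F_def b2_def)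
  have a1_0: "0 \<le> a1" using aa_ge0[OF t1] by (simp add: a1_def)
  have a2_d0: "a2 < d0" using L5(2)[OF t2] by (simp add: a2_def)
  have Ga1: "0 < G a1" using G_mono[OF a1_0] G0 by simp
  have inL: "x \<le> a2" if x: "a1 \<le> x" "x < a1 + dl" "x \<le> d0" for x
  proof -
    have lt: "x - th2 < a1 - th1" using x by (simp add: dl_def)
    have "G (a1 - th1) \<le> al * 1" using Ha1 G_le1[of a1] al0 by (simp add: mult_left_mono)
    then have "G (x - th2) < 1" using G_mono[of "x - th2" "a1 - th1"] lt al1 by linarith
    moreover have "0 < G (a1 - th1)" using Ha1 Ga1 al0 by simp
    ultimately have "G (x - th2) < G (a1 - th1)" using lt by (intro G_strict) auto
    moreover have "al * G a1 \<le> al * G x" using G_mono[OF x(1)] al0 by simp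
    ultimately have "H th2 x < 0" using Ha1 by (simp add: H_def)
    then have "x \<in> {x. x \<le> d0 \<and> H th2 x < 0}" using x by simp
    moreover have "bdd_above {x. x \<le> d0 \<and> H th2 x < 0}" by (auto intro!: bdd_aboveI[of _ d0])
    ultimately show ?thesis unfolding a2_def aa_def by (rule cSup_upper)
  qed
  have a12: "a1 \<le> a2" using inL[of a1] dl L5(2)[OF t1] by (simp add: a1_def)
  have A: "a1 + dl \<le> a2"
  proof (rule ccontr)
    assume "\<not> a1 + dl \<le> a2"
    define x where "x = min ((a2 + (a1 + dl)) / 2) ((a2 + d0) / 2)"
    have "a2 < x" "x < a1 + dl" "x \<le> d0" "a1 \<le> x"
      using \<open>\<not> a1 + dl \<le> a2\<close> a2_d0 a12 unfolding x_def min_def by auto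
    then show False using inL[of x] by simp
  qed
  have "(a1 + dl - a1) * g d0 \<le> G (a1 + dl) - G a1"
    by (rule int_lower) (use dl A a1_0 a2_d0 in \<open>auto intro!: g_mono\<close>)
  then have "dl * g d0 \<le> G (a1 + dl) - G a1" by simp
  moreover have "G (a1 + dl) \<le> G a2" using A G_mono by simp
  ultimately have "dl * g d0 \<le> G a2 - G a1" by linarith
  then have SA: "al * (dl * g d0) \<le> G (a2 - th2) - G (a1 - th1)"
    using al0 Ha1 Ha2 by (simp add: mult_left_mono right_diff_distrib[symmetric])
  define t1' where "t1' = b1 - th1"
  define t2' where "t2' = b2 - th2"
  have t1d: "d0 \<le> t1'" using t_ge[OF t1] by (simp add: t1'_def b1_def)
  have SB: "G t2' - G t1' \<le> al * (dl * g d0)"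
  proof (cases "t2' \<le> t1'")
    case True
    then have "G t2' - G t1' \<le> 0" using G_mono by simp
    moreover have "0 \<le> al * (dl * g d0)" using al0 dl g_nonneg by simp
    ultimately show ?thesis by linarith
  next
    case False
    then have tt: "t1' \<le> t2'" by simp
    have "((\<lambda>z. g (z + th2)) has_integral (G (t2' + th2) - G (t1' + th2))) {t1'..t2'}" by (rule shift_int[OF tt])
    moreover have "((\<lambda>z. g (z + 0)) has_integral (G (t2' + 0) - G (t1' + 0))) {t1'..t2'}" by (rule shift_int[OF tt])
    ultimately have X1: "G (t2' + th2) - G (t1' + th2) \<le> G (t2' + 0) - G (t1' + 0)"
      by (rule has_integral_le) (use t1d d0_pos th_pos[OF t2] in \<open>auto intro!: g_mono\<close>)
    have b1p: "0 \<le> b1" using t1d d0_pos th_pos[OF t1] by (simp add: t1'_def)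
    have "G (b1 + dl) - G b1 \<le> (b1 + dl - b1) * g b1"
      by (rule int_upper) (use dl b1p in \<open>auto intro!: g_mono\<close>)
    then have X2: "G (b1 + dl) - G b1 \<le> dl * g b1" by simp
    have eb: "t2' + th2 = b2" "t1' + th2 = b1 + dl" by (auto simp: t2'_def t1'_def dl_def)
    have "G b2 - G b1 \<le> (G t2' - G t1') + dl * g b1" using X1 X2 eb by simp
    moreover have "G t2' - G t1' = cc * (G b2 - G b1)" using Fb1 Fb2 by (simp add: t1'_def t2'_def right_diff_distrib)
    moreover have "0 \<le> cc" using al1 by (simp add: cc_def)
    ultimately have "G t2' - G t1' \<le> cc * ((G t2' - G t1') + dl * g b1)"
      by (metis mult_left_mono)
    then have "(1 - cc) * (G t2' - G t1') \<le> cc * (dl * g b1)" by (simp add: algebra_simps)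
    moreover have "(1 + al) * (G t2' - G t1') = 2 * ((1 - cc) * (G t2' - G t1'))" by (simp add: cc_def field_simps)
    moreover have "(1 - al) * (dl * g b1) = 2 * (cc * (dl * g b1))" by (simp add: cc_def field_simps)
    ultimately have D1: "(1 + al) * (G t2' - G t1') \<le> (1 - al) * (dl * g b1)" by linarith
    have "g b1 \<le> g (d0 + th1)" using t1d d0_pos th_pos[OF t1] by (intro g_mono) (auto simp: t1'_def)
    then have "(1 - al) * (dl * g b1) \<le> (1 - al) * (dl * g (d0 + th1))"
      using al1 dl by (intro mult_left_mono) auto
    also have "\<dots> = dl * (g (d0 + th1) * (1 - al))" by simp
    also have "\<dots> \<le> dl * (g d0 * (al * (1 + al)))" using lemK[OF t1(1)] dl by (intro mult_left_mono) auto
    also have "\<dots> = (1 + al) * (al * (dl * g d0))" by simp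
    finally have "(1 + al) * (G t2' - G t1') \<le> (1 + al) * (al * (dl * g d0))" using D1 by linarith
    then show ?thesis using al0 by simp
  qed
  have "coverage g al th1 = G t1' - G (a1 - th1)" using cov_eq[OF t1] by (simp add: t1'_def a1_def b1_def)
  moreover have "coverage g al th2 = G t2' - G (a2 - th2)" using cov_eq[OF t2] by (simp add: t2'_def a2_def b2_def)
  ultimately show ?thesis using SA SB by linarith
qed

end

theorem theorem1:
  fixes g :: "real \<Rightarrow> real" and \<alpha> :: real
  assumes "is_density g"
    and "symmetric_unimodal g"
    and "logconcave g"
    and "0 < \<alpha>" and "\<alpha> < 1"
  shows "\<forall>\<theta>1 \<theta>2. hpd_d1 g \<alpha> < \<theta>1 \<longrightarrow> \<theta>1 \<le> \<theta>2 \<longrightarrow> \<theta>2 < 2 * hpd_d0 g \<alpha> \<longrightarrow>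
           coverage g \<alpha> \<theta>2 \<le> coverage g \<alpha> \<theta>1"
proof -
  interpret S: setting g \<alpha>
    using assms by unfold_locales auto
  have e1: "hpd_d1 g \<alpha> = S.d1" by (simp add: hpd_d1_def S.d1_def S.Q_def)
  have e0: "hpd_d0 g \<alpha> = S.d0" by (simp add: hpd_d0_def S.d0_def S.Q_def)
  show ?thesis unfolding e1 e0 using S.main_mono by blast
qed

end
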